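(* Let $A$ be a set of $n$ distinct real numbers whose additive energy satisfies $E(A,A)=c|A|^2$ for some constant $c<5/2$. Then for every $a\in A$ there is an ordering $b_1,b_2,\dots,b_n$ of the elements of $A$ with $b_1=a$ such that the $n-1$ numbers $|b_2-b_1|,|b_3-b_2|,\dots,|b_n-b_{n-1}|$ are pairwise distinct.
   Context: The additive energy of a finite set $A\subset\mathbb{R}$ is $E(A,A)=|\{(x,y,z,w)\in A^4 : x+y=z+w\}|$. *)

theory Defs
  imports Complex_Main
begin

definition additive_energy :: "real set \<Rightarrow> nat" where
  "additive_energy A = card {(x, y, z, w). x \<in> A \<and> y \<in> A \<and> z \<in> A \<and> w \<in> A \<and> x + y = z + w}"

end

theory Submission
  imports Defs "HOL-Combinatorics.Multiset_Permutations"
begin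


definition fits :: "(nat \<times> 'a) list \<Rightarrow> 'a list \<Rightarrow> bool" where
  "fits cs xs = (\<forall>(q,v)\<in>set cs. q < length xs \<and> xs ! q = v)"

lemma distinct_map_remove1: "distinct (map f xs) \<Longrightarrow> distinct (map f (remove1 y xs))"
  by (induction xs) (auto dest: subsetD[OF set_remove1_subset])

lemma card_fits_le:
  assumes "finite S" "distinct (map fst cs)" "distinct (map snd cs)" "set (map snd cs) \<subseteq> S"
    "\<forall>q\<in>set (map fst cs). q < card S"
  shows "card {xs \<in> permutations_of_set S. fits cs xs} \<le> fact (card S - length cs)"
  using assms
proof (induction "length cs" arbitrary: cs S)
  case 0
  then show ?case by (simp add: fits_def)
next
  case (Suc k)
  have ne: "cs \<noteq> []" using Suc.hyps(2) by auto
  define p where "p = Max (fst ` set cs)"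
  have fin: "finite (fst ` set cs)" by simp
  have pin: "p \<in> fst ` set cs" unfolding p_def using ne by (intro Max_in) auto
  then obtain x where px: "(p, x) \<in> set cs" by force
  have pmax: "\<And>q v. (q,v) \<in> set cs \<Longrightarrow> q \<le> p" unfolding p_def using fin by (metis Max_ge fst_conv image_eqI)
  have dcs: "distinct cs" using Suc.prems(2) by (simp add: distinct_map)
  define cs' where "cs' = remove1 (p, x) cs"
  have setcs': "set cs' = set cs - {(p,x)}" unfolding cs'_def using dcs by simp
  have lencs': "length cs' = k" unfolding cs'_def using Suc.hyps(2) px by (simp add: length_remove1)
  have fstuniq: "\<And>q v. (q,v) \<in> set cs \<Longrightarrow> q = p \<Longrightarrow> v = x"
    using Suc.prems(2) px by (metis eq_key_imp_eq_value)
  have snduniq: "\<And>q v. (q,v) \<in> set cs \<Longrightarrow> v = x \<Longrightarrow> q = p"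
  proof -
    fix q v assume h: "(q,v) \<in> set cs" "v = x"
    have "inj_on snd (set cs)" using Suc.prems(3) by (simp add: distinct_map)
    then have "(q,v) = (p,x)" using h px by (metis inj_onD snd_conv)
    then show "q = p" by simp
  qed
  have xS: "x \<in> S" using Suc.prems(4) px by force
  have pS: "p < card S" using Suc.prems(5) px by force
  define S' where "S' = S - {x}"
  have cardS': "card S' = card S - 1" unfolding S'_def using xS Suc.prems(1) by simp
  have ltp: "\<And>q v. (q,v) \<in> set cs' \<Longrightarrow> q < p"
  proof -
    fix q v assume "(q,v) \<in> set cs'"
    then have "(q,v) \<in> set cs" "(q,v) \<noteq> (p,x)" using setcs' by auto
    moreover have "q \<le> p" using pmax calculation(1) by blast
    moreover have "q \<noteq> p" using fstuniq calculation(1,2) by blast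
    ultimately show "q < p" by simp
  qed
  have IH: "card {xs \<in> permutations_of_set S'. fits cs' xs} \<le> fact (card S' - length cs')"
  proof (rule Suc.hyps(1))
    show "k = length cs'" using lencs' by simp
    show "finite S'" using Suc.prems(1) unfolding S'_def by simp
    show "distinct (map fst cs')" unfolding cs'_def using Suc.prems(2) by (simp add: distinct_map_remove1)
    show "distinct (map snd cs')" unfolding cs'_def using Suc.prems(3) by (simp add: distinct_map_remove1)
    show "set (map snd cs') \<subseteq> S'"
      using Suc.prems(4) setcs' snduniq unfolding S'_def by force
    show "\<forall>q\<in>set (map fst cs'). q < card S'"
      using ltp pS cardS' by fastforce
  qed
  define del where "del = (\<lambda>xs::'a list. take p xs @ drop (Suc p) xs)"
  have inj: "inj_on del {xs \<in> permutations_of_set S. fits cs xs}"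
  proof (rule inj_onI)
    fix xs ys assume xs: "xs \<in> {xs \<in> permutations_of_set S. fits cs xs}"
      and ys: "ys \<in> {xs \<in> permutations_of_set S. fits cs xs}" and e: "del xs = del ys"
    have "p < length xs" "xs ! p = x" using xs px unfolding fits_def by auto
    have "p < length ys" "ys ! p = x" using ys px unfolding fits_def by auto
    have "xs = take p xs @ xs ! p # drop (Suc p) xs" using \<open>p < length xs\<close> by (simp add: id_take_nth_drop)
    moreover have "ys = take p ys @ ys ! p # drop (Suc p) ys" using \<open>p < length ys\<close> by (simp add: id_take_nth_drop)
    moreover have "take p xs = take p ys" using e \<open>p < length xs\<close> \<open>p < length ys\<close> unfolding del_def
      by (metis append_eq_append_conv length_take min.absorb4 min.strict_order_iff)
    moreover have "drop (Suc p) xs = drop (Suc p) ys" using e calculation(3) unfolding del_def by simp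
    ultimately show "xs = ys" using \<open>xs ! p = x\<close> \<open>ys ! p = x\<close> by metis
  qed
  have img: "del ` {xs \<in> permutations_of_set S. fits cs xs} \<subseteq> {xs \<in> permutations_of_set S'. fits cs' xs}"
  proof
    fix ys assume "ys \<in> del ` {xs \<in> permutations_of_set S. fits cs xs}"
    then obtain xs where xs: "xs \<in> permutations_of_set S" "fits cs xs" and ys: "ys = del xs" by auto
    have sx: "set xs = S" "distinct xs" using xs(1) by (auto dest: permutations_of_setD)
    have pl: "p < length xs" "xs ! p = x" using xs(2) px unfolding fits_def by auto
    have dec: "xs = take p xs @ x # drop (Suc p) xs" using pl by (metis id_take_nth_drop)
    have "distinct (take p xs @ x # drop (Suc p) xs)" using sx dec by metis
    hence d2: "distinct ys" "x \<notin> set ys" unfolding ys del_def by auto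
    have "set xs = insert x (set ys)" unfolding ys del_def by (subst dec) auto
    hence "set ys = S'" unfolding S'_def using sx d2 by auto
    moreover have "fits cs' ys"
      unfolding fits_def
    proof (intro ballI, clarify)
      fix q v assume qv: "(q,v) \<in> set cs'"
      have "q < p" using ltp qv by blast
      have "(q,v) \<in> set cs" using qv setcs' by auto
      hence "q < length xs" "xs ! q = v" using xs(2) unfolding fits_def by auto
      moreover have "length (take p xs) = p" using pl by simp
      ultimately show "q < length ys \<and> ys ! q = v" unfolding ys del_def using \<open>q < p\<close> pl
        by (auto simp: nth_append)
    qed
    ultimately show "ys \<in> {xs \<in> permutations_of_set S'. fits cs' xs}" using d2 by auto
  qed
  have "card {xs \<in> permutations_of_set S. fits cs xs} \<le> card {xs \<in> permutations_of_set S'. fits cs' xs}"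
    by (rule card_inj_on_le[OF inj img]) simp
  also have "\<dots> \<le> fact (card S' - length cs')" by (rule IH)
  also have "card S' - length cs' = card S - length cs" using cardS' lencs' Suc.hyps(2) by simp
  finally show ?case .
qed



definition QS :: "real set \<Rightarrow> (real \<times> real \<times> real \<times> real) set" where
  "QS A = {(x,y,z,w). x\<in>A \<and> y\<in>A \<and> z\<in>A \<and> w\<in>A \<and> x\<noteq>y \<and> z\<noteq>w \<and> \<not>(x=z\<and>y=w) \<and> \<not>(x=w\<and>y=z) \<and> \<bar>x-y\<bar> = \<bar>z-w\<bar>}"

lemma finite_QS: "finite A \<Longrightarrow> finite (QS A)"
proof -
  assume "finite A"
  have "QS A \<subseteq> A \<times> A \<times> A \<times> A" unfolding QS_def by auto
  then show ?thesis using \<open>finite A\<close> by (meson finite_SigmaI finite_subset)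
qed

lemma card_offdiag:
  assumes "finite A"
  shows "card {(p,q). p\<in>A \<and> q\<in>A \<and> p\<noteq>q} + card A = card A * card A"
proof -
  let ?O = "{(p,q). p\<in>A \<and> q\<in>A \<and> p\<noteq>q}"
  let ?D = "(\<lambda>p. (p,p)) ` A"
  have eq: "A \<times> A = ?O \<union> ?D" by auto
  have "?O \<subseteq> A \<times> A" by auto
  then have fO: "finite ?O" using assms by (meson finite_SigmaI finite_subset)
  have fD: "finite ?D" using assms by simp
  have cD: "card ?D = card A" by (rule card_image) (auto simp: inj_on_def)
  have "card (A \<times> A) = card ?O + card ?D" unfolding eq by (rule card_Un_disjoint[OF fO fD]) auto
  then show ?thesis using cD by (simp add: card_cartesian_product)
qed

lemma QS_energy:
  assumes fin: "finite A"
  shows "card (QS A) + 4 * card A ^ 2 \<le> 2 * additive_energy A + 2 * card A"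
proof -
  define n where "n = card A"
  define ED where "ED = {(x, y, z, w). x \<in> A \<and> y \<in> A \<and> z \<in> A \<and> w \<in> A \<and> x + y = z + w}"
  have E: "additive_energy A = card ED" unfolding additive_energy_def ED_def by simp
  have finED: "finite ED"
  proof -
    have "ED \<subseteq> A \<times> A \<times> A \<times> A" unfolding ED_def by auto
    then show ?thesis using fin by (meson finite_SigmaI finite_subset)
  qed
  define OD where "OD = {(p,q). p\<in>A \<and> q\<in>A \<and> p\<noteq>q}"
  have "OD \<subseteq> A \<times> A" unfolding OD_def by auto
  then have finOD: "finite OD" using fin by (meson finite_SigmaI finite_subset)
  define T1 where "T1 = (\<lambda>(p,q). (p,q,p,q)) ` (A \<times> A)"
  define T2 where "T2 = (\<lambda>(p,q). (p,q,q,p)) ` OD"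
  have cT1: "card T1 = n * n" unfolding T1_def n_def
    by (subst card_image) (auto simp: inj_on_def card_cartesian_product)
  have cT2: "card T2 + n = n * n" unfolding T2_def n_def
    by (subst card_image) (auto simp: inj_on_def OD_def intro: card_offdiag[OF fin, unfolded OD_def])
  have finT: "finite T1" "finite T2" unfolding T1_def T2_def using fin finOD by auto
  have dT: "T1 \<inter> T2 = {}" unfolding T1_def T2_def OD_def by auto
  have TED: "T1 \<union> T2 \<subseteq> ED" unfolding T1_def T2_def OD_def ED_def by auto
  define QP where "QP = {t \<in> QS A. case t of (x,y,z,w) \<Rightarrow> x - y = z - w}"
  define QM where "QM = {t \<in> QS A. case t of (x,y,z,w) \<Rightarrow> x - y = w - z}"
  have QPM: "QS A = QP \<union> QM"
  proof
    show "QS A \<subseteq> QP \<union> QM"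
    proof
      fix t assume t: "t \<in> QS A"
      obtain x y z w where tt: "t = (x,y,z,w)" by (cases t) auto
      have "\<bar>x-y\<bar> = \<bar>z-w\<bar>" using t tt unfolding QS_def by auto
      then have "x - y = z - w \<or> x - y = w - z" by (auto simp: abs_if split: if_splits)
      then show "t \<in> QP \<union> QM" using t tt unfolding QP_def QM_def by auto
    qed
  qed (auto simp: QP_def QM_def)
  have dQ: "QP \<inter> QM = {}" unfolding QP_def QM_def QS_def by auto
  have finQ: "finite QP" "finite QM" using finite_QS[OF fin] unfolding QP_def QM_def by auto
  define f1 where "f1 = (\<lambda>(x::real,y::real,z::real,w::real). (x,w,z,y))"
  define f2 where "f2 = (\<lambda>(x::real,y::real,z::real,w::real). (x,z,w,y))"
  have i1: "inj_on f1 QP" unfolding f1_def by (auto simp: inj_on_def)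
  have i2: "inj_on f2 QM" unfolding f2_def by (auto simp: inj_on_def)
  have s1: "f1 ` QP \<subseteq> ED" unfolding f1_def QP_def QS_def ED_def by auto
  have s2: "f2 ` QM \<subseteq> ED" unfolding f2_def QM_def QS_def ED_def by auto
  have mT1: "\<And>x y z w. (x,y,z,w) \<in> T1 \<Longrightarrow> x = z \<and> y = w" unfolding T1_def by auto
  have mT2: "\<And>x y z w. (x,y,z,w) \<in> T2 \<Longrightarrow> x = w \<and> y = z \<and> x \<noteq> y" unfolding T2_def OD_def by auto
  have mQ: "\<And>x y z w. (x,y,z,w) \<in> QS A \<Longrightarrow> x\<noteq>y \<and> z\<noteq>w \<and> \<not>(x=z\<and>y=w) \<and> \<not>(x=w\<and>y=z)"
    unfolding QS_def by auto
  have d1: "f1 ` QP \<inter> (T1 \<union> T2) = {}"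
  proof -
    { fix x y z w assume "(x,y,z,w) \<in> QP" "f1 (x,y,z,w) \<in> T1 \<union> T2"
      then have False using mT1[of x w z y] mT2[of x w z y] mQ[of x y z w] unfolding QP_def f1_def by auto }
    note H = this
    show ?thesis
    proof (rule equals0I)
      fix u assume "u \<in> f1 ` QP \<inter> (T1 \<union> T2)"
      then obtain t where "t \<in> QP" "f1 t \<in> T1 \<union> T2" by auto
      moreover obtain x y z w where "t = (x,y,z,w)" by (cases t) auto
      ultimately show False using H by blast
    qed
  qed
  have d2: "f2 ` QM \<inter> (T1 \<union> T2) = {}"
  proof -
    { fix x y z w assume "(x,y,z,w) \<in> QM" "f2 (x,y,z,w) \<in> T1 \<union> T2"
      then have False using mT1[of x z w y] mT2[of x z w y] mQ[of x y z w] unfolding QM_def f2_def by auto }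
    note H = this
    show ?thesis
    proof (rule equals0I)
      fix u assume "u \<in> f2 ` QM \<inter> (T1 \<union> T2)"
      then obtain t where "t \<in> QM" "f2 t \<in> T1 \<union> T2" by auto
      moreover obtain x y z w where "t = (x,y,z,w)" by (cases t) auto
      ultimately show False using H by blast
    qed
  qed
  have "card QP + card T1 + card T2 \<le> card ED"
  proof -
    have "card (f1 ` QP \<union> (T1 \<union> T2)) \<le> card ED" using s1 TED finED by (intro card_mono) auto
    moreover have "card (f1 ` QP \<union> (T1 \<union> T2)) = card QP + card T1 + card T2"
      using d1 dT finT finQ i1 by (simp add: card_Un_disjoint card_image)
    ultimately show ?thesis by simp
  qed
  moreover have "card QM + card T1 + card T2 \<le> card ED"
  proof -
    have "card (f2 ` QM \<union> (T1 \<union> T2)) \<le> card ED" using s2 TED finED by (intro card_mono) auto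
    moreover have "card (f2 ` QM \<union> (T1 \<union> T2)) = card QM + card T1 + card T2"
      using d2 dT finT finQ i2 by (simp add: card_Un_disjoint card_image)
    ultimately show ?thesis by simp
  qed
  moreover have "card (QS A) = card QP + card QM" using QPM dQ finQ by (simp add: card_Un_disjoint)
  ultimately have X: "card (QS A) + 2 * card T1 + 2 * card T2 \<le> 2 * card ED" by linarith
  have "card (QS A) + 4 * (n*n) \<le> 2 * card ED + 2 * n" using X cT1 cT2 by linarith
  then show ?thesis using E by (simp add: n_def power2_eq_square)
qed



definition step :: "real \<Rightarrow> real list \<Rightarrow> nat \<Rightarrow> real" where
  "step a p i = \<bar>(a # p) ! (i + 1) - (a # p) ! i\<bar>"

definition Q1 :: "real set \<Rightarrow> (real \<times> real \<times> real \<times> real) set" where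
  "Q1 S = {(x,y,z,w). x\<in>S \<and> y\<in>S \<and> z\<in>S \<and> w\<in>S \<and> x\<noteq>y \<and> x\<noteq>z \<and> x\<noteq>w \<and> y\<noteq>z \<and> y\<noteq>w \<and> z\<noteq>w \<and> \<bar>x-y\<bar> = \<bar>z-w\<bar>}"
definition Q2 :: "real \<Rightarrow> real set \<Rightarrow> (real \<times> real \<times> real \<times> real) set" where
  "Q2 a S = {(x,y,z,w). x = a \<and> y\<in>S \<and> z\<in>S \<and> w\<in>S \<and> y\<noteq>z \<and> y\<noteq>w \<and> z\<noteq>w \<and> \<bar>x-y\<bar> = \<bar>z-w\<bar>}"
definition Q4 :: "real \<Rightarrow> real set \<Rightarrow> (real \<times> real \<times> real \<times> real) set" where
  "Q4 a S = {(x,y,z,w). x = a \<and> y\<in>S \<and> w\<in>S \<and> z = y \<and> y\<noteq>w \<and> \<bar>x-y\<bar> = \<bar>y-w\<bar>}"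
definition Q6 :: "real set \<Rightarrow> (real \<times> real \<times> real \<times> real) set" where
  "Q6 S = {(x,y,z,w). x\<in>S \<and> y\<in>S \<and> w\<in>S \<and> z = y \<and> x\<noteq>y \<and> y\<noteq>w \<and> x\<noteq>w \<and> \<bar>x-y\<bar> = \<bar>y-w\<bar>}"

lemma fin4: "finite S \<Longrightarrow> X \<subseteq> S' \<times> S' \<times> S' \<times> S' \<Longrightarrow> finite S' \<Longrightarrow> finite X"
  by (meson finite_SigmaI finite_subset)

lemma card_UN_bound:
  assumes "finite I" "\<And>t. t \<in> I \<Longrightarrow> card (F t) \<le> K"
  shows "card (\<Union>t\<in>I. F t) \<le> card I * K"
proof -
  have "card (\<Union>t\<in>I. F t) \<le> (\<Sum>t\<in>I. card (F t))" by (rule card_UN_le[OF assms(1)])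
  also have "\<dots> \<le> (\<Sum>t\<in>I. K)" using assms(2) by (rule sum_mono)
  finally show ?thesis by simp
qed

context
  fixes a :: real and S :: "real set"
  assumes finS: "finite S" and aS: "a \<notin> S"
begin

abbreviation "PP \<equiv> permutations_of_set S"

lemma PP_props: "p \<in> PP \<Longrightarrow> length p = card S \<and> distinct p \<and> set p = S"
  by (auto dest: permutations_of_setD length_finite_permutations_of_set)

lemma nth_in: "p \<in> PP \<Longrightarrow> i < card S \<Longrightarrow> p ! i \<in> S"
  using PP_props by (metis nth_mem)

lemma nth_neq: "p \<in> PP \<Longrightarrow> i < card S \<Longrightarrow> j < card S \<Longrightarrow> i \<noteq> j \<Longrightarrow> p ! i \<noteq> p ! j"
  using PP_props by (metis nth_eq_iff_index_eq)

lemma boundA: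
  assumes "1 \<le> i" "i + 2 \<le> j" "j < card S"
  shows "card {p \<in> PP. step a p i = step a p j} \<le> card (Q1 S) * fact (card S - 4)"
proof -
  have sub: "{p \<in> PP. step a p i = step a p j} \<subseteq>
     (\<Union>t\<in>Q1 S. case t of (x,y,z,w) \<Rightarrow> {p \<in> PP. fits [(i-1,x),(i,y),(j-1,z),(j,w)] p})"
  proof
    fix p assume "p \<in> {p \<in> PP. step a p i = step a p j}"
    then have p: "p \<in> PP" "step a p i = step a p j" by auto
    have l: "length p = card S" using PP_props[OF p(1)] by simp
    let ?t = "(p!(i-1), p!i, p!(j-1), p!j)"
    have st: "step a p i = \<bar>p!i - p!(i-1)\<bar>" "step a p j = \<bar>p!j - p!(j-1)\<bar>"
      using assms unfolding step_def by (auto simp: nth_Cons')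
    have nn: "\<And>u v. u < card S \<Longrightarrow> v < card S \<Longrightarrow> u \<noteq> v \<Longrightarrow> p!u \<noteq> p!v" by (rule nth_neq[OF p(1)])
    have d: "p!(i-1) \<noteq> p!i" "p!(i-1) \<noteq> p!(j-1)" "p!(i-1) \<noteq> p!j" "p!i \<noteq> p!(j-1)"
      "p!i \<noteq> p!j" "p!(j-1) \<noteq> p!j" by (rule nn; insert assms; linarith)+
    have m: "p!(i-1) \<in> S" "p!i \<in> S" "p!(j-1) \<in> S" "p!j \<in> S" using assms by (auto intro!: nth_in[OF p(1)])
    have "?t \<in> Q1 S" unfolding Q1_def using p(2) st d m by (simp add: abs_minus_commute)
    moreover have "fits [(i-1,p!(i-1)),(i,p!i),(j-1,p!(j-1)),(j,p!j)] p"
      unfolding fits_def using l assms by auto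
    ultimately show "p \<in> (\<Union>t\<in>Q1 S. case t of (x,y,z,w) \<Rightarrow> {p \<in> PP. fits [(i-1,x),(i,y),(j-1,z),(j,w)] p})"
      using p(1) by (intro UN_I[of ?t]) auto
  qed
  have finQ: "finite (Q1 S)" by (rule fin4[OF finS _ finS]) (auto simp: Q1_def)
  have "card {p \<in> PP. step a p i = step a p j} \<le>
     card (\<Union>t\<in>Q1 S. case t of (x,y,z,w) \<Rightarrow> {p \<in> PP. fits [(i-1,x),(i,y),(j-1,z),(j,w)] p})"
    by (rule card_mono[OF _ sub]) (auto intro: finite_subset[OF _ finite_permutations_of_set])
  also have "\<dots> \<le> card (Q1 S) * fact (card S - 4)"
  proof (rule card_UN_bound[OF finQ])
    fix t assume t: "t \<in> Q1 S"
    obtain x y z w where tt: "t = (x,y,z,w)" by (cases t) auto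
    have "card {p \<in> PP. fits [(i-1,x),(i,y),(j-1,z),(j,w)] p} \<le> fact (card S - length [(i-1,x),(i,y),(j-1,z),(j,w)])"
      using t tt assms by (intro card_fits_le[OF finS]) (auto simp: Q1_def)
    then show "card (case t of (x,y,z,w) \<Rightarrow> {p \<in> PP. fits [(i-1,x),(i,y),(j-1,z),(j,w)] p}) \<le> fact (card S - 4)"
      using tt by (simp add: numeral_eq_Suc)
  qed
  finally show ?thesis .
qed


lemma boundB:
  assumes "2 \<le> j" "j < card S"
  shows "card {p \<in> PP. step a p 0 = step a p j} \<le> card (Q2 a S) * fact (card S - 3)"
proof -
  let ?F = "\<lambda>t. case t of (x,y,z,w) \<Rightarrow> {p \<in> PP. fits [(0,y),(j-1,z),(j,w)] p}"
  have sub: "{p \<in> PP. step a p 0 = step a p j} \<subseteq> (\<Union>t\<in>Q2 a S. ?F t)"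
  proof
    fix p assume "p \<in> {p \<in> PP. step a p 0 = step a p j}"
    then have p: "p \<in> PP" "step a p 0 = step a p j" by auto
    have l: "length p = card S" using PP_props[OF p(1)] by simp
    let ?t = "(a, p!0, p!(j-1), p!j)"
    have st: "step a p 0 = \<bar>p!0 - a\<bar>" "step a p j = \<bar>p!j - p!(j-1)\<bar>"
      using assms unfolding step_def by (auto simp: nth_Cons')
    have nn: "\<And>u v. u < card S \<Longrightarrow> v < card S \<Longrightarrow> u \<noteq> v \<Longrightarrow> p!u \<noteq> p!v" by (rule nth_neq[OF p(1)])
    have d: "p!0 \<noteq> p!(j-1)" "p!0 \<noteq> p!j" "p!(j-1) \<noteq> p!j" by (rule nn; insert assms; linarith)+
    have m: "p!0 \<in> S" "p!(j-1) \<in> S" "p!j \<in> S" using assms by (auto intro!: nth_in[OF p(1)])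
    have "?t \<in> Q2 a S" unfolding Q2_def using p(2) st d m by (simp add: abs_minus_commute)
    moreover have "fits [(0,p!0),(j-1,p!(j-1)),(j,p!j)] p"
      unfolding fits_def using l assms by auto
    ultimately show "p \<in> (\<Union>t\<in>Q2 a S. ?F t)" using p(1) by (intro UN_I[of ?t]) auto
  qed
  have finQ: "finite (Q2 a S)" by (rule fin4[OF finS _ finite_insert[THEN iffD2, OF finS]]) (auto simp: Q2_def)
  have "card {p \<in> PP. step a p 0 = step a p j} \<le> card (\<Union>t\<in>Q2 a S. ?F t)"
    by (rule card_mono[OF _ sub]) (auto intro: finite_subset[OF _ finite_permutations_of_set])
  also have "\<dots> \<le> card (Q2 a S) * fact (card S - 3)"
  proof (rule card_UN_bound[OF finQ])
    fix t assume t: "t \<in> Q2 a S"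
    obtain x y z w where tt: "t = (x,y,z,w)" by (cases t) auto
    have "card {p \<in> PP. fits [(0,y),(j-1,z),(j,w)] p} \<le> fact (card S - length [(0,y),(j-1,z),(j,w)])"
      using t tt assms by (intro card_fits_le[OF finS]) (auto simp: Q2_def)
    then show "card (?F t) \<le> fact (card S - 3)" using tt by (simp add: numeral_eq_Suc)
  qed
  finally show ?thesis .
qed

lemma boundC:
  assumes "2 \<le> card S"
  shows "card {p \<in> PP. step a p 0 = step a p 1} \<le> card (Q4 a S) * fact (card S - 2)"
proof -
  let ?F = "\<lambda>t. case t of (x,y,z,w) \<Rightarrow> {p \<in> PP. fits [(0,y),(1,w)] p}"
  have sub: "{p \<in> PP. step a p 0 = step a p 1} \<subseteq> (\<Union>t\<in>Q4 a S. ?F t)"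
  proof
    fix p assume "p \<in> {p \<in> PP. step a p 0 = step a p 1}"
    then have p: "p \<in> PP" "step a p 0 = step a p 1" by auto
    have l: "length p = card S" using PP_props[OF p(1)] by simp
    let ?t = "(a, p!0, p!0, p!1)"
    have st: "step a p 0 = \<bar>p!0 - a\<bar>" "step a p 1 = \<bar>p!1 - p!0\<bar>"
      unfolding step_def by (auto simp: nth_Cons')
    have d: "p!0 \<noteq> p!1" using assms by (intro nth_neq[OF p(1)]) auto
    have m: "p!0 \<in> S" "p!1 \<in> S" using assms by (auto intro!: nth_in[OF p(1)])
    have "?t \<in> Q4 a S" unfolding Q4_def using p(2) st d m by (simp add: abs_minus_commute)
    moreover have "fits [(0,p!0),(1,p!1)] p"
      unfolding fits_def using l assms by auto
    ultimately show "p \<in> (\<Union>t\<in>Q4 a S. ?F t)" using p(1) by (intro UN_I[of ?t]) auto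
  qed
  have finQ: "finite (Q4 a S)" by (rule fin4[OF finS _ finite_insert[THEN iffD2, OF finS]]) (auto simp: Q4_def)
  have "card {p \<in> PP. step a p 0 = step a p 1} \<le> card (\<Union>t\<in>Q4 a S. ?F t)"
    by (rule card_mono[OF _ sub]) (auto intro: finite_subset[OF _ finite_permutations_of_set])
  also have "\<dots> \<le> card (Q4 a S) * fact (card S - 2)"
  proof (rule card_UN_bound[OF finQ])
    fix t assume t: "t \<in> Q4 a S"
    obtain x y z w where tt: "t = (x,y,z,w)" by (cases t) auto
    have "card {p \<in> PP. fits [(0,y),(1,w)] p} \<le> fact (card S - length [(0::nat,y),(1,w)])"
      using t tt assms by (intro card_fits_le[OF finS]) (auto simp: Q4_def)
    then show "card (?F t) \<le> fact (card S - 2)" using tt by (simp add: numeral_eq_Suc)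
  qed
  finally show ?thesis .
qed

lemma boundD:
  assumes "1 \<le> i" "i + 1 < card S"
  shows "card {p \<in> PP. step a p i = step a p (i+1)} \<le> card (Q6 S) * fact (card S - 3)"
proof -
  let ?F = "\<lambda>t. case t of (x,y,z,w) \<Rightarrow> {p \<in> PP. fits [(i-1,x),(i,y),(i+1,w)] p}"
  have sub: "{p \<in> PP. step a p i = step a p (i+1)} \<subseteq> (\<Union>t\<in>Q6 S. ?F t)"
  proof
    fix p assume "p \<in> {p \<in> PP. step a p i = step a p (i+1)}"
    then have p: "p \<in> PP" "step a p i = step a p (i+1)" by auto
    have l: "length p = card S" using PP_props[OF p(1)] by simp
    let ?t = "(p!(i-1), p!i, p!i, p!(i+1))"
    have st: "step a p i = \<bar>p!i - p!(i-1)\<bar>" "step a p (i+1) = \<bar>p!(i+1) - p!i\<bar>"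
      using assms unfolding step_def by (auto simp: nth_Cons')
    have nn: "\<And>u v. u < card S \<Longrightarrow> v < card S \<Longrightarrow> u \<noteq> v \<Longrightarrow> p!u \<noteq> p!v" by (rule nth_neq[OF p(1)])
    have d: "p!(i-1) \<noteq> p!i" "p!i \<noteq> p!(i+1)" "p!(i-1) \<noteq> p!(i+1)" by (rule nn; insert assms; linarith)+
    have m: "p!(i-1) \<in> S" "p!i \<in> S" "p!(i+1) \<in> S" using assms by (auto intro!: nth_in[OF p(1)])
    have "?t \<in> Q6 S" unfolding Q6_def using p(2) st d m by (simp add: abs_minus_commute)
    moreover have "fits [(i-1,p!(i-1)),(i,p!i),(i+1,p!(i+1))] p"
      unfolding fits_def using l assms by auto
    ultimately show "p \<in> (\<Union>t\<in>Q6 S. ?F t)" using p(1) by (intro UN_I[of ?t]) auto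
  qed
  have finQ: "finite (Q6 S)" by (rule fin4[OF finS _ finS]) (auto simp: Q6_def)
  have "card {p \<in> PP. step a p i = step a p (i+1)} \<le> card (\<Union>t\<in>Q6 S. ?F t)"
    by (rule card_mono[OF _ sub]) (auto intro: finite_subset[OF _ finite_permutations_of_set])
  also have "\<dots> \<le> card (Q6 S) * fact (card S - 3)"
  proof (rule card_UN_bound[OF finQ])
    fix t assume t: "t \<in> Q6 S"
    obtain x y z w where tt: "t = (x,y,z,w)" by (cases t) auto
    have "card {p \<in> PP. fits [(i-1,x),(i,y),(i+1,w)] p} \<le> fact (card S - length [(i-1,x),(i,y),(i+1,w)])"
      using t tt assms by (intro card_fits_le[OF finS]) (auto simp: Q6_def)
    then show "card (?F t) \<le> fact (card S - 3)" using tt by (simp add: numeral_eq_Suc)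
  qed
  finally show ?thesis .
qed

end



lemma card_Ta: "2 * card {(i::nat,j). 1 \<le> i \<and> i+2 \<le> j \<and> j < m} = (m-2)*(m-3)"
proof (induction m)
  case 0
  then show ?case by simp
next
  case (Suc m)
  have eq: "{(i::nat,j). 1 \<le> i \<and> i+2 \<le> j \<and> j < Suc m} = {(i,j). 1 \<le> i \<and> i+2 \<le> j \<and> j < m} \<union> (\<lambda>i. (i,m)) ` {1..m-2}"
    by auto
  have fin: "finite {(i::nat,j). 1 \<le> i \<and> i+2 \<le> j \<and> j < m}"
    by (rule finite_subset[of _ "{..<m} \<times> {..<m}"]) auto
  have "card {(i::nat,j). 1 \<le> i \<and> i+2 \<le> j \<and> j < Suc m} = card {(i::nat,j). 1 \<le> i \<and> i+2 \<le> j \<and> j < m} + card ((\<lambda>i. (i,m)) ` {1..m-2})"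
    unfolding eq by (rule card_Un_disjoint[OF fin]) auto
  also have "card ((\<lambda>i. (i,m)) ` {1..m-2}) = m - 2" by (subst card_image) (auto simp: inj_on_def)
  finally have c: "card {(i::nat,j). 1 \<le> i \<and> i+2 \<le> j \<and> j < Suc m} = card {(i::nat,j). 1 \<le> i \<and> i+2 \<le> j \<and> j < m} + (m - 2)" .
  show ?case
  proof (cases "m \<ge> 3")
    case True
    then obtain k where k: "m = k + 3" by (metis add.commute le_iff_add)
    show ?thesis using Suc.IH c unfolding k by (simp add: algebra_simps)
  next
    case False
    then show ?thesis using Suc.IH c by (cases m; cases "m - 1"; simp)
  qed
qed


lemma sum_le_card_mult: "(\<And>i. i \<in> A \<Longrightarrow> f i \<le> (K::nat)) \<Longrightarrow> sum f A \<le> card A * K"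
  using sum_bounded_above[of A f K] by simp

lemma sum_bound:
  fixes a :: real and S :: "real set"
  assumes finS: "finite S" and aS: "a \<notin> S" and m4: "4 \<le> card S"
  shows "2 * (\<Sum>ij\<in>{(i,j). i<j \<and> j<card S}. card {p \<in> permutations_of_set S. step a p (fst ij) = step a p (snd ij)})
     \<le> fact (card S - 2) * (card (Q1 S) + 2*card (Q2 a S) + 2*card (Q4 a S) + 2*card (Q6 S))"
proof -
  define m where "m = card S"
  define g where "g = (\<lambda>ij. card {p \<in> permutations_of_set S. step a p (fst ij) = step a p (snd ij)})"
  define Ta where "Ta = {(i::nat,j). 1 \<le> i \<and> i+2 \<le> j \<and> j < m}"
  define Tb where "Tb = (\<lambda>j. (0::nat,j)) ` {2..<m}"
  define Td where "Td = (\<lambda>i. (i,i+1)) ` {1..<m-1}"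
  have split: "{(i,j). i<j \<and> j<m} = Ta \<union> (Tb \<union> ({(0,1)} \<union> Td))"
  proof
    show "{(i,j). i<j \<and> j<m} \<subseteq> Ta \<union> (Tb \<union> ({(0,1)} \<union> Td))"
    proof
      fix x assume "x \<in> {(i,j). i<j \<and> j<m}"
      then obtain i j where xij: "x = (i,j)" and ij: "i < j" "j < m" by auto
      show "x \<in> Ta \<union> (Tb \<union> ({(0,1)} \<union> Td))"
      proof (cases "i = 0")
        case True
        show ?thesis
        proof (cases "j = 1")
          case True
          then show ?thesis using \<open>i = 0\<close> xij by auto
        next
          case False
          then have "(i,j) \<in> Tb" unfolding Tb_def using \<open>i = 0\<close> ij by (intro rev_image_eqI[of j]) auto
          then show ?thesis using xij by blast
        qed
      next
        case False
        show ?thesis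
        proof (cases "j = i + 1")
          case True
          then have "(i,j) \<in> Td" unfolding Td_def using False ij by (intro rev_image_eqI[of i]) auto
          then show ?thesis using xij by blast
        next
          case F2: False
          then have "(i,j) \<in> Ta" unfolding Ta_def using False ij by auto
          then show ?thesis using xij by blast
        qed
      qed
    qed
    show "Ta \<union> (Tb \<union> ({(0,1)} \<union> Td)) \<subseteq> {(i,j). i<j \<and> j<m}"
      unfolding Ta_def Tb_def Td_def using m4 m_def by auto
  qed
  have finTa: "finite Ta" unfolding Ta_def by (rule finite_subset[of _ "{..<m} \<times> {..<m}"]) auto
  have finTb: "finite Tb" "finite Td" unfolding Tb_def Td_def by auto
  have "(\<Sum>ij\<in>{(i,j). i<j \<and> j<m}. g ij) = (\<Sum>ij\<in>Ta. g ij) + ((\<Sum>ij\<in>Tb. g ij) + (g (0,1) + (\<Sum>ij\<in>Td. g ij)))"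
    unfolding split
    apply (subst sum.union_disjoint)
    using finTa finTb apply (auto simp: Ta_def Tb_def Td_def)[3]
    apply (subst sum.union_disjoint)
    using finTa finTb apply (auto simp: Ta_def Tb_def Td_def)[3]
    apply (subst sum.union_disjoint)
    using finTa finTb apply (auto simp: Ta_def Tb_def Td_def)[3]
    by simp
  moreover have "(\<Sum>ij\<in>Ta. g ij) \<le> card Ta * (card (Q1 S) * fact (m - 4))"
  proof (rule sum_le_card_mult)
    fix ij assume "ij \<in> Ta"
    then obtain i j where "ij = (i,j)" "1 \<le> i" "i+2 \<le> j" "j < m" unfolding Ta_def by auto
    then show "g ij \<le> card (Q1 S) * fact (m - 4)" unfolding g_def m_def using boundA[OF finS aS] by simp
  qed
  moreover have "(\<Sum>ij\<in>Tb. g ij) \<le> (m - 2) * (card (Q2 a S) * fact (m - 3))"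
  proof -
    have "(\<Sum>ij\<in>Tb. g ij) = (\<Sum>j\<in>{2..<m}. g (0,j))" unfolding Tb_def by (subst sum.reindex) (auto simp: inj_on_def)
    also have "\<dots> \<le> card {2..<m} * (card (Q2 a S) * fact (m - 3))"
    proof (rule sum_le_card_mult)
      fix j assume "j \<in> {2..<m}"
      then show "g (0,j) \<le> card (Q2 a S) * fact (m - 3)" unfolding g_def m_def using boundB[OF finS aS] by simp
    qed
    finally show ?thesis by (simp add: numeral_eq_Suc)
  qed
  moreover have "g (0,1) \<le> card (Q4 a S) * fact (m - 2)"
    unfolding g_def m_def using boundC[OF finS aS] m4 by simp
  moreover have "(\<Sum>ij\<in>Td. g ij) \<le> (m - 2) * (card (Q6 S) * fact (m - 3))"
  proof -
    have "(\<Sum>ij\<in>Td. g ij) = (\<Sum>i\<in>{1..<m-1}. g (i,i+1))" unfolding Td_def by (subst sum.reindex) (auto simp: inj_on_def)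
    also have "\<dots> \<le> card {1..<m-1} * (card (Q6 S) * fact (m - 3))"
    proof (rule sum_le_card_mult)
      fix i assume "i \<in> {1..<m-1}"
      then have "1 \<le> i" "i + 1 < card S" unfolding m_def by auto
      then show "g (i,i+1) \<le> card (Q6 S) * fact (m - 3)" unfolding g_def m_def using boundD[OF finS aS] by simp
    qed
    finally show ?thesis by (simp add: numeral_eq_Suc)
  qed
  moreover have cTa: "2 * card Ta = (m-2)*(m-3)" unfolding Ta_def by (rule card_Ta)
  moreover have "2 * (card Ta * (card (Q1 S) * fact (m - 4))) = (m-2)*(m-3) * (card (Q1 S) * fact (m - 4))"
    using cTa by (metis mult.assoc)
  ultimately have "2 * (\<Sum>ij\<in>{(i,j). i<j \<and> j<m}. g ij) \<le>
      (m-2)*(m-3) * (card (Q1 S) * fact (m - 4)) + 2 * ((m - 2) * (card (Q2 a S) * fact (m - 3)))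
      + 2 * (card (Q4 a S) * fact (m - 2)) + 2 * ((m - 2) * (card (Q6 S) * fact (m - 3)))"
    by linarith
  also have "\<dots> = fact (m - 2) * (card (Q1 S) + 2*card (Q2 a S) + 2*card (Q4 a S) + 2*card (Q6 S))"
  proof -
    obtain k where k: "m = k + 4" using m4 m_def by (metis add.commute le_iff_add)
    have f3: "fact (m - 3) = (k+1) * fact k" unfolding k by (simp add: numeral_eq_Suc)
    have f2: "fact (m - 2) = (k+2) * ((k+1) * fact k)" unfolding k by (simp add: numeral_eq_Suc)
    show ?thesis unfolding f3 f2 unfolding k by (simp add: algebra_simps numeral_eq_Suc)
  qed
  finally show ?thesis unfolding g_def m_def .
qed




definition tau :: "real \<Rightarrow> real \<times> real \<times> real \<times> real \<Rightarrow> nat" where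
  "tau a t = (case t of (u1,u2,u3,u4) \<Rightarrow>
     if u1 = a then (if u2 = u3 then 3 else 1)
     else if u3 = a then (if u1 = u4 then 4 else 2)
     else if u2 = u3 then 5 else if u1 = u4 then 6 else 0)"

definition sw :: "real \<times> real \<times> real \<times> real \<Rightarrow> real \<times> real \<times> real \<times> real" where
  "sw t = (case t of (x,y,z,w) \<Rightarrow> (z,w,x,y))"

lemma inj_sw: "inj sw" unfolding sw_def by (auto simp: inj_on_def)

lemma Q_partition:
  assumes finA: "finite A" and aA: "a \<in> A"
  shows "card (Q1 (A - {a})) + 2 * card (Q2 a (A - {a})) + 2 * card (Q4 a (A - {a})) + 2 * card (Q6 (A - {a}))
         \<le> card (QS A)"
proof -
  let ?S = "A - {a}"
  let ?C = "\<lambda>k. card {t \<in> QS A. tau a t = k}"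
  have fin: "finite (QS A)" by (rule finite_QS[OF finA])
  have grp: "(\<Sum>k\<in>{0..<7}. ?C k) = card (QS A)"
  proof -
    have "tau a ` QS A \<subseteq> {0..<7}" unfolding tau_def by (auto split: prod.splits)
    then have "(\<Sum>k\<in>{0..<7}. sum (\<lambda>_. 1::nat) {t \<in> QS A. tau a t = k}) = sum (\<lambda>_. 1) (QS A)"
      by (intro sum.group[OF fin]) auto
    then show ?thesis by simp
  qed
  have sub: "\<And>X k. X \<subseteq> {t \<in> QS A. tau a t = k} \<Longrightarrow> card X \<le> ?C k"
    by (rule card_mono) (use fin in auto)
  have c0: "card (Q1 ?S) \<le> ?C 0" by (rule sub) (auto simp: Q1_def QS_def tau_def)
  have c1: "card (Q2 a ?S) \<le> ?C 1" by (rule sub) (auto simp: Q2_def QS_def tau_def aA)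
  have c2: "card (sw ` Q2 a ?S) \<le> ?C 2" by (rule sub) (auto simp: Q2_def QS_def tau_def sw_def aA)
  have c3: "card (Q4 a ?S) \<le> ?C 3" by (rule sub) (auto simp: Q4_def QS_def tau_def aA)
  have c4: "card (sw ` Q4 a ?S) \<le> ?C 4" by (rule sub) (auto simp: Q4_def QS_def tau_def sw_def aA)
  have c5: "card (Q6 ?S) \<le> ?C 5" by (rule sub) (auto simp: Q6_def QS_def tau_def)
  have c6: "card (sw ` Q6 ?S) \<le> ?C 6" by (rule sub) (auto simp: Q6_def QS_def tau_def sw_def)
  have s: "\<And>X. card (sw ` X) = card X" by (rule card_image) (rule inj_on_subset[OF inj_sw], simp)
  have "(\<Sum>k\<in>{0..<7}. ?C k) = ?C 0 + ?C 1 + ?C 2 + ?C 3 + ?C 4 + ?C 5 + ?C 6"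
    by (simp add: eval_nat_numeral)
  then show ?thesis using grp c0 c1 c2 c3 c4 c5 c6 s by simp
qed



lemma good_perm:
  assumes "p \<in> permutations_of_set S" "a \<notin> S" "finite S"
    and "\<forall>i j. i < j \<and> j < card S \<longrightarrow> step a p i \<noteq> step a p j"
  shows "distinct (a # p) \<and> set (a # p) = insert a S \<and> hd (a # p) = a \<and>
     distinct (map (\<lambda>i. \<bar>(a # p) ! (i + 1) - (a # p) ! i\<bar>) [0..<length (a # p) - 1])"
proof -
  have pp: "length p = card S" "distinct p" "set p = S" using assms(1)
    by (auto dest: permutations_of_setD length_finite_permutations_of_set)
  have "distinct (map (\<lambda>i. step a p i) [0..<card S])"
    unfolding distinct_conv_nth
  proof (intro allI impI)
    fix i j assume "i < length (map (step a p) [0..<card S])" "j < length (map (step a p) [0..<card S])" "i \<noteq> j"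
    then have ij: "i < card S" "j < card S" "i \<noteq> j" by auto
    show "map (step a p) [0..<card S] ! i \<noteq> map (step a p) [0..<card S] ! j"
      using ij assms(4) by (cases "i < j") (auto, metis linorder_neqE_nat)
  qed
  then show ?thesis using pp assms(2) by (simp add: step_def)
qed

theorem large_case:
  fixes A :: "real set" and c :: real and a :: real
  assumes finA: "finite A" and n8: "8 \<le> card A"
    and E: "real (additive_energy A) = c * real (card A) ^ 2"
    and c: "c < 5 / 2" and aA: "a \<in> A"
  shows "\<exists>bs :: real list. distinct bs \<and> set bs = A \<and> hd bs = a \<and>
           distinct (map (\<lambda>i. \<bar>bs ! (i + 1) - bs ! i\<bar>) [0..<length bs - 1])"
proof (rule ccontr)
  assume no: "\<not> ?thesis"
  define S where "S = A - {a}"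
  define n where "n = card A"
  define m where "m = card S"
  have finS: "finite S" and aS: "a \<notin> S" using finA unfolding S_def by auto
  have mn: "m = n - 1" unfolding m_def n_def S_def using finA aA by simp
  have m7: "7 \<le> m" using mn n8 n_def by simp
  have ins: "insert a S = A" unfolding S_def using aA by auto
  define Pairs where "Pairs = {(i::nat,j). i<j \<and> j<m}"
  define B where "B = (\<lambda>ij. {p \<in> permutations_of_set S. step a p (fst ij) = step a p (snd ij)})"
  have finP: "finite Pairs" unfolding Pairs_def by (rule finite_subset[of _ "{..<m} \<times> {..<m}"]) auto
  have allbad: "\<forall>p\<in>permutations_of_set S. \<exists>ij\<in>Pairs. p \<in> B ij"
  proof
    fix p assume p: "p \<in> permutations_of_set S"
    show "\<exists>ij\<in>Pairs. p \<in> B ij"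
    proof (rule ccontr)
      assume "\<not> (\<exists>ij\<in>Pairs. p \<in> B ij)"
      then have "\<forall>i j. i < j \<and> j < card S \<longrightarrow> step a p i \<noteq> step a p j"
        unfolding Pairs_def B_def m_def using p by auto
      from good_perm[OF p aS finS this] have "\<exists>bs :: real list. distinct bs \<and> set bs = A \<and> hd bs = a \<and>
           distinct (map (\<lambda>i. \<bar>bs ! (i + 1) - bs ! i\<bar>) [0..<length bs - 1])"
        using ins by blast
      then show False using no by blast
    qed
  qed
  have "permutations_of_set S \<subseteq> snd ` (SIGMA ij:Pairs. B ij)"
    using allbad by force
  moreover have fSig: "finite (SIGMA ij:Pairs. B ij)"
    by (rule finite_SigmaI[OF finP]) (simp add: B_def)
  ultimately have "card (permutations_of_set S) \<le> card (snd ` (SIGMA ij:Pairs. B ij))"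
    by (intro card_mono) auto
  also have "\<dots> \<le> card (SIGMA ij:Pairs. B ij)" by (rule card_image_le[OF fSig])
  also have "\<dots> = (\<Sum>ij\<in>Pairs. card (B ij))"
    by (rule card_SigmaI[OF finP]) (simp add: B_def)
  finally have c1: "fact m \<le> (\<Sum>ij\<in>Pairs. card (B ij))" using finS unfolding m_def by simp
  have c2: "2 * (\<Sum>ij\<in>Pairs. card (B ij)) \<le> fact (m - 2) * card (QS A)"
  proof -
    have "2 * (\<Sum>ij\<in>Pairs. card (B ij)) \<le> fact (m - 2) * (card (Q1 S) + 2*card (Q2 a S) + 2*card (Q4 a S) + 2*card (Q6 S))"
      unfolding Pairs_def B_def m_def using sum_bound[OF finS aS] m7 m_def by simp
    also have "\<dots> \<le> fact (m - 2) * card (QS A)"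
      using Q_partition[OF finA aA] unfolding S_def by simp
    finally show ?thesis .
  qed
  have c3: "card (QS A) < n * n + 2 * n"
  proof -
    have h: "card (QS A) + 4 * n^2 \<le> 2 * additive_energy A + 2 * n" using QS_energy[OF finA] n_def by simp
    have "real (card (QS A) + 4 * n^2) \<le> real (2 * additive_energy A + 2 * n)" using h by (simp only: of_nat_le_iff)
    then have h2: "real (card (QS A)) + 4 * real n ^ 2 \<le> 2 * real (additive_energy A) + 2 * real n" by simp
    have "real (additive_energy A) < 5/2 * real n ^ 2"
      using E c n8 unfolding n_def by (simp add: mult_strict_right_mono)
    with h2 have "real (card (QS A)) < real n * real n + 2 * real n" by (simp add: power2_eq_square)
    then have "real (card (QS A)) < real (n * n + 2 * n)" by simp
    then show ?thesis by (simp only: of_nat_less_iff)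
  qed
  have c4: "n * n + 2 * n \<le> 2 * (m * (m - 1))"
  proof -
    define k where "k = m - 7"
    have k: "m = k + 7" using m7 unfolding k_def by simp
    have nk: "n = k + 8" using mn k n8 n_def by simp
    have "(k+8)*(k+8) + 2*(k+8) \<le> 2*((k+7)*(k+6))" by (simp add: algebra_simps)
    then show ?thesis unfolding k nk by (simp add: algebra_simps)
  qed
  have fm: "fact m = m * (m - 1) * fact (m - 2)"
  proof -
    define k where "k = m - 2"
    have k: "m = k + 2" using m7 unfolding k_def by simp
    show ?thesis unfolding k by (simp add: numeral_eq_Suc algebra_simps)
  qed
  have "fact (m - 2) * card (QS A) < fact (m - 2) * (2 * (m * (m - 1)))"
    using c3 c4 by (intro mult_strict_left_mono) (auto simp: fact_gt_zero)
  then have "2 * (\<Sum>ij\<in>Pairs. card (B ij)) < 2 * fact m" using c2 fm by (simp add: algebra_simps)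
  then show False using c1 by linarith
qed


definition rb :: "real list \<Rightarrow> bool" where
 "rb bs = distinct (map (\<lambda>i. \<bar>bs ! (i + 1) - bs ! i\<bar>) [0..<length bs - 1])"

lemma pick: "rb bs \<Longrightarrow> distinct bs \<Longrightarrow> set bs = X \<Longrightarrow> hd bs = a \<Longrightarrow> \<exists>bs. distinct bs \<and> set bs = X \<and> hd bs = a \<and> rb bs"
  by blast

lemma small_1:
  fixes x1 :: real
  assumes srt: "sorted_wrt (<) [x1]" and am: "a \<in> set [x1]"
  shows "\<exists>bs. distinct bs \<and> set bs = set [x1] \<and> hd bs = a \<and> rb bs"
proof -
  have lts: "sorted_wrt (<) [x1]" by (rule srt)
  from am consider "a = x1" by auto
  then show ?thesis
  proof cases
    case 1
    have D: "rb [x1]" unfolding rb_def by simp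
    show ?thesis by (insert D lts 1, ((elim disjE)?; (rule pick, assumption, auto)))
  qed
qed

lemma small_2:
  fixes x1 x2 :: real
  assumes srt: "sorted_wrt (<) [x1, x2]" and am: "a \<in> set [x1, x2]"
  shows "\<exists>bs. distinct bs \<and> set bs = set [x1, x2] \<and> hd bs = a \<and> rb bs"
proof -
  have lt: "x1 < x2" using srt by simp_all
  have lts: "sorted_wrt (<) [x1, x2]" by (rule srt)
  from am consider "a = x1" | "a = x2" by auto
  then show ?thesis
  proof cases
    case 1
    have D: "rb [x1, x2]" unfolding rb_def by simp
    show ?thesis by (insert D lts 1, ((elim disjE)?; (rule pick, assumption, auto)))
  next
    case 2
    have D: "rb [x2, x1]" unfolding rb_def by simp
    show ?thesis by (insert D lts 2, ((elim disjE)?; (rule pick, assumption, auto)))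
  qed
qed

lemma small_3:
  fixes x1 x2 x3 :: real
  assumes srt: "sorted_wrt (<) [x1, x2, x3]" and am: "a \<in> set [x1, x2, x3]"
  shows "\<exists>bs. distinct bs \<and> set bs = set [x1, x2, x3] \<and> hd bs = a \<and> rb bs"
proof -
  have lt: "x1 < x2" "x2 < x3" using srt by simp_all
  have lts: "sorted_wrt (<) [x1, x2, x3]" by (rule srt)
  from am consider "a = x1" | "a = x2" | "a = x3" by auto
  then show ?thesis
  proof cases
    case 1
    have D: "rb [x1, x3, x2]" using lt unfolding rb_def by (simp add: upt_rec abs_if; smt (verit))
    show ?thesis by (insert D lts 1, ((elim disjE)?; (rule pick, assumption, auto)))
  next
    case 2
    have D: "rb [x2, x1, x3]" using lt unfolding rb_def by (simp add: upt_rec abs_if; smt (verit))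
    show ?thesis by (insert D lts 2, ((elim disjE)?; (rule pick, assumption, auto)))
  next
    case 3
    have D: "rb [x3, x1, x2]" using lt unfolding rb_def by (simp add: upt_rec abs_if; smt (verit))
    show ?thesis by (insert D lts 3, ((elim disjE)?; (rule pick, assumption, auto)))
  qed
qed

lemma small_4:
  fixes x1 x2 x3 x4 :: real
  assumes srt: "sorted_wrt (<) [x1, x2, x3, x4]" and am: "a \<in> set [x1, x2, x3, x4]"
  shows "\<exists>bs. distinct bs \<and> set bs = set [x1, x2, x3, x4] \<and> hd bs = a \<and> rb bs"
proof -
  have lt: "x1 < x2" "x2 < x3" "x3 < x4" using srt by simp_all
  have lts: "sorted_wrt (<) [x1, x2, x3, x4]" by (rule srt)
  from am consider "a = x1" | "a = x2" | "a = x3" | "a = x4" by auto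
  then show ?thesis
  proof cases
    case 1
    have D: "rb [x1, x4, x2, x3]" using lt unfolding rb_def by (simp add: upt_rec abs_if; smt (verit))
    show ?thesis by (insert D lts 1, ((elim disjE)?; (rule pick, assumption, auto)))
  next
    case 2
    have D: "rb [x2, x3, x1, x4]" using lt unfolding rb_def by (simp add: upt_rec abs_if; smt (verit))
    show ?thesis by (insert D lts 2, ((elim disjE)?; (rule pick, assumption, auto)))
  next
    case 3
    have D: "rb [x3, x2, x4, x1]" using lt unfolding rb_def by (simp add: upt_rec abs_if; smt (verit))
    show ?thesis by (insert D lts 3, ((elim disjE)?; (rule pick, assumption, auto)))
  next
    case 4
    have D: "rb [x4, x1, x3, x2]" using lt unfolding rb_def by (simp add: upt_rec abs_if; smt (verit))
    show ?thesis by (insert D lts 4, ((elim disjE)?; (rule pick, assumption, auto)))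
  qed
qed

lemma small_5:
  fixes x1 x2 x3 x4 x5 :: real
  assumes srt: "sorted_wrt (<) [x1, x2, x3, x4, x5]" and am: "a \<in> set [x1, x2, x3, x4, x5]"
  shows "\<exists>bs. distinct bs \<and> set bs = set [x1, x2, x3, x4, x5] \<and> hd bs = a \<and> rb bs"
proof -
  have lt: "x1 < x2" "x2 < x3" "x3 < x4" "x4 < x5" using srt by simp_all
  have lts: "sorted_wrt (<) [x1, x2, x3, x4, x5]" by (rule srt)
  from am consider "a = x1" | "a = x2" | "a = x3" | "a = x4" | "a = x5" by auto
  then show ?thesis
  proof cases
    case 1
    have D: "rb [x1, x5, x2, x4, x3]" using lt unfolding rb_def by (simp add: upt_rec abs_if; smt (verit))
    show ?thesis by (insert D lts 1, ((elim disjE)?; (rule pick, assumption, auto)))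
  next
    case 2
    have D: "rb [x2, x3, x5, x1, x4] \<or> rb [x2, x4, x3, x5, x1] \<or> rb [x2, x5, x1, x4, x3]" using lt unfolding rb_def by (simp add: upt_rec abs_if; smt (verit))
    show ?thesis by (insert D lts 2, ((elim disjE)?; (rule pick, assumption, auto)))
  next
    case 3
    have D: "rb [x3, x2, x4, x1, x5]" using lt unfolding rb_def by (simp add: upt_rec abs_if; smt (verit))
    show ?thesis by (insert D lts 3, ((elim disjE)?; (rule pick, assumption, auto)))
  next
    case 4
    have D: "rb [x4, x1, x5, x2, x3] \<or> rb [x4, x2, x3, x1, x5] \<or> rb [x4, x3, x1, x5, x2]" using lt unfolding rb_def by (simp add: upt_rec abs_if; smt (verit))
    show ?thesis by (insert D lts 4, ((elim disjE)?; (rule pick, assumption, auto)))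
  next
    case 5
    have D: "rb [x5, x1, x4, x2, x3]" using lt unfolding rb_def by (simp add: upt_rec abs_if; smt (verit))
    show ?thesis by (insert D lts 5, ((elim disjE)?; (rule pick, assumption, auto)))
  qed
qed

lemma small_6:
  fixes x1 x2 x3 x4 x5 x6 :: real
  assumes srt: "sorted_wrt (<) [x1, x2, x3, x4, x5, x6]" and am: "a \<in> set [x1, x2, x3, x4, x5, x6]"
  shows "\<exists>bs. distinct bs \<and> set bs = set [x1, x2, x3, x4, x5, x6] \<and> hd bs = a \<and> rb bs"
proof -
  have lt: "x1 < x2" "x2 < x3" "x3 < x4" "x4 < x5" "x5 < x6" using srt by simp_all
  have lts: "sorted_wrt (<) [x1, x2, x3, x4, x5, x6]" by (rule srt)
  from am consider "a = x1" | "a = x2" | "a = x3" | "a = x4" | "a = x5" | "a = x6" by auto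
  then show ?thesis
  proof cases
    case 1
    have D: "rb [x1, x6, x2, x5, x3, x4]" using lt unfolding rb_def by (simp add: upt_rec abs_if; smt (verit))
    show ?thesis by (insert D lts 1, ((elim disjE)?; (rule pick, assumption, auto)))
  next
    case 2
    have D: "rb [x2, x1, x5, x4, x6, x3] \<or> rb [x2, x6, x1, x4, x3, x5] \<or> rb [x2, x6, x1, x5, x3, x4]" using lt unfolding rb_def by (simp add: upt_rec abs_if; smt (verit))
    show ?thesis by (insert D lts 2, ((elim disjE)?; (rule pick, assumption, auto)))
  next
    case 3
    have D: "rb [x3, x4, x2, x5, x1, x6]" using lt unfolding rb_def by (simp add: upt_rec abs_if; smt (verit))
    show ?thesis by (insert D lts 3, ((elim disjE)?; (rule pick, assumption, auto)))
  next
    case 4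
    have D: "rb [x4, x3, x5, x2, x6, x1]" using lt unfolding rb_def by (simp add: upt_rec abs_if; smt (verit))
    show ?thesis by (insert D lts 4, ((elim disjE)?; (rule pick, assumption, auto)))
  next
    case 5
    have D: "rb [x5, x1, x6, x2, x4, x3] \<or> rb [x5, x1, x6, x3, x4, x2] \<or> rb [x5, x6, x2, x3, x1, x4]" using lt unfolding rb_def by (simp add: upt_rec abs_if; smt (verit))
    show ?thesis by (insert D lts 5, ((elim disjE)?; (rule pick, assumption, auto)))
  next
    case 6
    have D: "rb [x6, x1, x5, x2, x4, x3]" using lt unfolding rb_def by (simp add: upt_rec abs_if; smt (verit))
    show ?thesis by (insert D lts 6, ((elim disjE)?; (rule pick, assumption, auto)))
  qed
qed

lemma small_7:
  fixes x1 x2 x3 x4 x5 x6 x7 :: real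
  assumes srt: "sorted_wrt (<) [x1, x2, x3, x4, x5, x6, x7]" and am: "a \<in> set [x1, x2, x3, x4, x5, x6, x7]"
  shows "\<exists>bs. distinct bs \<and> set bs = set [x1, x2, x3, x4, x5, x6, x7] \<and> hd bs = a \<and> rb bs"
proof -
  have lt: "x1 < x2" "x2 < x3" "x3 < x4" "x4 < x5" "x5 < x6" "x6 < x7" using srt by simp_all
  have lts: "sorted_wrt (<) [x1, x2, x3, x4, x5, x6, x7]" by (rule srt)
  from am consider "a = x1" | "a = x2" | "a = x3" | "a = x4" | "a = x5" | "a = x6" | "a = x7" by auto
  then show ?thesis
  proof cases
    case 1
    have D: "rb [x1, x7, x2, x6, x3, x5, x4]" using lt unfolding rb_def by (simp add: upt_rec abs_if; smt (verit))
    show ?thesis by (insert D lts 1, ((elim disjE)?; (rule pick, assumption, auto)))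
  next
    case 2
    have D: "rb [x2, x5, x1, x6, x7, x4, x3] \<or> rb [x2, x5, x3, x4, x7, x1, x6] \<or> rb [x2, x6, x1, x7, x4, x5, x3] \<or> rb [x2, x7, x1, x6, x3, x5, x4]" using lt unfolding rb_def by (simp add: upt_rec abs_if; smt (verit))
    show ?thesis by (insert D lts 2, ((elim disjE)?; (rule pick, assumption, auto)))
  next
    case 3
    have D: "rb [x3, x4, x2, x5, x1, x6, x7] \<or> rb [x3, x4, x2, x6, x1, x7, x5] \<or> rb [x3, x4, x5, x2, x6, x1, x7] \<or> rb [x3, x4, x6, x1, x5, x2, x7] \<or> rb [x3, x5, x4, x2, x6, x1, x7] \<or> rb [x3, x5, x4, x6, x2, x7, x1] \<or> rb [x3, x5, x4, x7, x1, x6, x2] \<or> rb [x3, x7, x1, x6, x2, x5, x4]" using lt unfolding rb_def by (simp add: upt_rec abs_if; smt (verit))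
    show ?thesis by (insert D lts 3, ((elim disjE)?; (rule pick, assumption, auto)))
  next
    case 4
    have D: "rb [x4, x3, x5, x2, x6, x1, x7]" using lt unfolding rb_def by (simp add: upt_rec abs_if; smt (verit))
    show ?thesis by (insert D lts 4, ((elim disjE)?; (rule pick, assumption, auto)))
  next
    case 5
    have D: "rb [x5, x1, x7, x2, x4, x3, x6] \<or> rb [x5, x2, x4, x3, x6, x1, x7] \<or> rb [x5, x3, x4, x2, x6, x1, x7] \<or> rb [x5, x4, x2, x7, x1, x6, x3]" using lt unfolding rb_def by (simp add: upt_rec abs_if; smt (verit))
    show ?thesis by (insert D lts 5, ((elim disjE)?; (rule pick, assumption, auto)))
  next
    case 6
    have D: "rb [x6, x1, x7, x2, x5, x3, x4] \<or> rb [x6, x2, x7, x1, x4, x3, x5] \<or> rb [x6, x2, x7, x1, x5, x3, x4] \<or> rb [x6, x3, x4, x2, x7, x1, x5]" using lt unfolding rb_def by (simp add: upt_rec abs_if; smt (verit))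
    show ?thesis by (insert D lts 6, ((elim disjE)?; (rule pick, assumption, auto)))
  next
    case 7
    have D: "rb [x7, x1, x6, x2, x5, x3, x4]" using lt unfolding rb_def by (simp add: upt_rec abs_if; smt (verit))
    show ?thesis by (insert D lts 7, ((elim disjE)?; (rule pick, assumption, auto)))
  qed
qed
lemma len_1: "length (xs::real list) = 1 \<Longrightarrow> \<exists>x1. xs = [x1]"
  by (auto simp add: length_Suc_conv numeral_eq_Suc)

lemma len_2: "length (xs::real list) = 2 \<Longrightarrow> \<exists>x1 x2. xs = [x1, x2]"
  by (auto simp add: length_Suc_conv numeral_eq_Suc)

lemma len_3: "length (xs::real list) = 3 \<Longrightarrow> \<exists>x1 x2 x3. xs = [x1, x2, x3]"
  by (auto simp add: length_Suc_conv numeral_eq_Suc)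

lemma len_4: "length (xs::real list) = 4 \<Longrightarrow> \<exists>x1 x2 x3 x4. xs = [x1, x2, x3, x4]"
  by (auto simp add: length_Suc_conv numeral_eq_Suc)

lemma len_5: "length (xs::real list) = 5 \<Longrightarrow> \<exists>x1 x2 x3 x4 x5. xs = [x1, x2, x3, x4, x5]"
  by (auto simp add: length_Suc_conv numeral_eq_Suc)

lemma len_6: "length (xs::real list) = 6 \<Longrightarrow> \<exists>x1 x2 x3 x4 x5 x6. xs = [x1, x2, x3, x4, x5, x6]"
  by (auto simp add: length_Suc_conv numeral_eq_Suc)

lemma len_7: "length (xs::real list) = 7 \<Longrightarrow> \<exists>x1 x2 x3 x4 x5 x6 x7. xs = [x1, x2, x3, x4, x5, x6, x7]"
  by (auto simp add: length_Suc_conv numeral_eq_Suc)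

lemma small_case:
  fixes A :: "real set" and a :: real
  assumes finA: "finite A" and n7: "card A \<le> 7" and aA: "a \<in> A"
  shows "\<exists>bs :: real list. distinct bs \<and> set bs = A \<and> hd bs = a \<and>
           distinct (map (\<lambda>i. \<bar>bs ! (i + 1) - bs ! i\<bar>) [0..<length bs - 1])"
proof -
  define xs where "xs = sorted_list_of_set A"
  have sx: "set xs = A" unfolding xs_def using finA by simp
  have lx: "length xs = card A" unfolding xs_def by simp
  have srt: "sorted_wrt (<) xs" unfolding xs_def using strict_sorted_list_of_set by simp
  have ax: "a \<in> set xs" using sx aA by simp
  have "card A > 0" using finA aA card_gt_0_iff by blast
  then have "card A = 1 \<or> card A = 2 \<or> card A = 3 \<or> card A = 4 \<or> card A = 5 \<or> card A = 6 \<or> card A = 7"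
    using n7 by linarith
  then have "\<exists>bs. distinct bs \<and> set bs = set xs \<and> hd bs = a \<and> rb bs"
  proof (elim disjE)
    assume "card A = 1"
    then obtain x1 where e: "xs = [x1]" using len_1 lx by metis
    show ?thesis using small_1[of x1 a] srt ax unfolding e by blast
  next
    assume "card A = 2"
    then obtain x1 x2 where e: "xs = [x1, x2]" using len_2 lx by metis
    show ?thesis using small_2[of x1 x2 a] srt ax unfolding e by blast
  next
    assume "card A = 3"
    then obtain x1 x2 x3 where e: "xs = [x1, x2, x3]" using len_3 lx by metis
    show ?thesis using small_3[of x1 x2 x3 a] srt ax unfolding e by blast
  next
    assume "card A = 4"
    then obtain x1 x2 x3 x4 where e: "xs = [x1, x2, x3, x4]" using len_4 lx by metis
    show ?thesis using small_4[of x1 x2 x3 x4 a] srt ax unfolding e by blast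
  next
    assume "card A = 5"
    then obtain x1 x2 x3 x4 x5 where e: "xs = [x1, x2, x3, x4, x5]" using len_5 lx by metis
    show ?thesis using small_5[of x1 x2 x3 x4 x5 a] srt ax unfolding e by blast
  next
    assume "card A = 6"
    then obtain x1 x2 x3 x4 x5 x6 where e: "xs = [x1, x2, x3, x4, x5, x6]" using len_6 lx by metis
    show ?thesis using small_6[of x1 x2 x3 x4 x5 x6 a] srt ax unfolding e by blast
  next
    assume "card A = 7"
    then obtain x1 x2 x3 x4 x5 x6 x7 where e: "xs = [x1, x2, x3, x4, x5, x6, x7]" using len_7 lx by metis
    show ?thesis using small_7[of x1 x2 x3 x4 x5 x6 x7 a] srt ax unfolding e by blast
  qed
  then show ?thesis using sx unfolding rb_def by blast
qed

theorem theorem2: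
  fixes A :: "real set" and c :: real and a :: real
  assumes "finite A"
    and "real (additive_energy A) = c * real (card A) ^ 2"
    and "c < 5 / 2"
    and "a \<in> A"
  shows "\<exists>bs :: real list. distinct bs \<and> set bs = A \<and> hd bs = a \<and>
           distinct (map (\<lambda>i. \<bar>bs ! (i + 1) - bs ! i\<bar>) [0..<length bs - 1])"
proof (cases "card A \<le> 7")
  case True
  then show ?thesis using small_case assms by blast
next
  case False
  then show ?thesis using large_case[OF assms(1) _ assms(2,3,4)] by simp
qed

end
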